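(* Let $K$ be a field, $A\subset K$ and $B\subset K$ finite sets with $|A|=m$, $|B|=n$. Let $0\le p\le m$, $0\le q\le n$, set $d:=p+q$ and assume $\max\{m,n\}\le d\le m+n-1$. Set $k:=m+n-d-1$, $c:=(d-m)(n-q)+d-n$ and $e:=(d-m)(q+1)$. Then $$\operatorname{Syl}_{p,q}(A,B)=(-1)^c\binom{k}{n-q}\operatorname{Syl}_{0,k}(A,B)+(-1)^e\binom{k+1}{m-p}\operatorname{Syl}_{m,d-m}(A,B).$$
   Context: For finite sets $Y,Z$, $\mathcal{R}(Y,Z):=\prod_{y\in Y,z\in Z}(y-z)$ (equal to $1$ if $Y$ or $Z$ is empty), and $\mathcal{R}(x,Z):=\mathcal{R}(\{x\},Z)$. For $0\le p\le m$, $0\le q\le n$, $$\operatorname{Syl}_{p,q}(A,B)(x):=\sum_{\substack{A'\subset A,\ B'\subset B\\ |A'|=p,\ |B'|=q}}\mathcal{R}(A',B')\,\mathcal{R}(A\setminus A',B\setminus B')\,\frac{\mathcal{R}(x,A')\,\mathcal{R}(x,B')}{\mathcal{R}(A',A\setminus A')\,\mathcal{R}(B',B\setminus B')}.$$ *)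

theory Defs
  imports "HOL-Computational_Algebra.Polynomial"
begin

definition Rprod :: "'a::field set \<Rightarrow> 'a set \<Rightarrow> 'a" where
  "Rprod Y Z = (\<Prod>y\<in>Y. \<Prod>z\<in>Z. (y - z))"

definition Rpoly :: "'a::field set \<Rightarrow> 'a poly" where
  "Rpoly Y = (\<Prod>y\<in>Y. [:- y, 1:])"

definition Syl :: "nat \<Rightarrow> nat \<Rightarrow> 'a::field set \<Rightarrow> 'a set \<Rightarrow> 'a poly" where
  "Syl p q A B =
     (\<Sum>A'\<in>{A'. A' \<subseteq> A \<and> card A' = p}. \<Sum>B'\<in>{B'. B' \<subseteq> B \<and> card B' = q}.
        smult (Rprod A' B' * Rprod (A - A') (B - B') /
               (Rprod A' (A - A') * Rprod B' (B - B')))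
              (Rpoly A' * Rpoly B'))"

end

theory Submission imports Defs "HOL-Computational_Algebra.Fraction_Field" begin

abbreviation subs :: "nat \<Rightarrow> 'b set \<Rightarrow> 'b set set" where
  "subs p A \<equiv> {A'. A' \<subseteq> A \<and> card A' = p}"

definition WW :: "'a::field set \<Rightarrow> 'a set \<Rightarrow> 'a set \<Rightarrow> 'a set \<Rightarrow> 'a" where
  "WW A B A' B' = Rprod A' B' * Rprod (A - A') (B - B') /
               (Rprod A' (A - A') * Rprod B' (B - B'))"

definition sig :: "nat \<Rightarrow> nat \<Rightarrow> 'a::field set \<Rightarrow> 'a set \<Rightarrow> 'a" where
  "sig p q A B = (\<Sum>A'\<in>subs p A. \<Sum>B'\<in>subs q B. WW A B A' B')"

lemma Syl_WW: "Syl p q A B = (\<Sum>A'\<in>subs p A. \<Sum>B'\<in>subs q B.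
        smult (WW A B A' B') (Rpoly A' * Rpoly B'))"
  unfolding Syl_def WW_def by simp

lemma finite_subs[simp]: "finite A \<Longrightarrow> finite (subs p A)"
  by (rule finite_subset[of _ "Pow A"]) auto

lemma Rprod_union_left: "finite X \<Longrightarrow> finite Y \<Longrightarrow> X \<inter> Y = {} \<Longrightarrow>
   Rprod (X \<union> Y) Z = Rprod X Z * Rprod Y Z"
  unfolding Rprod_def by (rule prod.union_disjoint)

lemma Rprod_union_right: "finite Y \<Longrightarrow> finite Z \<Longrightarrow> Y \<inter> Z = {} \<Longrightarrow>
   Rprod X (Y \<union> Z) = Rprod X Y * Rprod X Z"
  unfolding Rprod_def by (simp add: prod.union_disjoint prod.distrib)

lemma Rprod_swap: "finite X \<Longrightarrow> finite Y \<Longrightarrow>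
   Rprod Y X = (-1) ^ (card X * card Y) * Rprod X Y"
proof -
  assume fx: "finite X" and fy: "finite Y"
  have "Rprod Y X = (\<Prod>y\<in>Y. \<Prod>x\<in>X. - (x - y))" unfolding Rprod_def by simp
  also have "\<dots> = (\<Prod>y\<in>Y. (\<Prod>x\<in>X. (-1) * (x - y)))" by simp
  also have "\<dots> = (\<Prod>y\<in>Y. (-1) ^ card X * (\<Prod>x\<in>X. (x - y)))"
    by (simp only: prod.distrib prod_constant)
  also have "\<dots> = (-1) ^ (card X * card Y) * (\<Prod>y\<in>Y. \<Prod>x\<in>X. (x - y))"
    by (simp add: prod.distrib power_mult)
  also have "(\<Prod>y\<in>Y. \<Prod>x\<in>X. (x - y)) = Rprod X Y"
    unfolding Rprod_def by (rule prod.swap)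
  finally show ?thesis .
qed

lemma Rprod_nz: "X \<inter> Y = {} \<Longrightarrow> Rprod X Y \<noteq> 0"
proof -
  assume d: "X \<inter> Y = {}"
  have "\<forall>y\<in>X. (\<Prod>z\<in>Y. y - z) \<noteq> 0"
    using d by (cases "finite Y") (auto simp: prod_zero_iff)
  then show ?thesis unfolding Rprod_def by (cases "finite X") (auto simp: prod_zero_iff)
qed

lemma Rprod_single_left: "Rprod {a} Y = (\<Prod>y\<in>Y. a - y)"
  unfolding Rprod_def by simp

lemma poly_Rpoly: "poly (Rpoly S) x = Rprod {x} S"
  unfolding Rpoly_def Rprod_def by (simp add: poly_prod)

lemma Rpoly_monic: "finite S \<Longrightarrow> degree (Rpoly S) = card S \<and> lead_coeff (Rpoly S) = 1"
proof -
  assume f: "finite S"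
  have d: "degree (Rpoly S) = card S" unfolding Rpoly_def
    by (simp add: degree_prod_sum_eq)
  have "lead_coeff (Rpoly S) = 1" unfolding Rpoly_def by (simp add: lead_coeff_prod)
  with d show ?thesis by simp
qed

lemma coeff_Syl_deg: assumes "finite A" "finite B"
  shows "degree (Syl p q A B) \<le> p + q" and "coeff (Syl p q A B) (p + q) = sig p q A B"
proof -
  have dg: "degree (Rpoly A' * Rpoly B') = p + q \<and> coeff (Rpoly A' * Rpoly B') (p+q) = 1"
    if "A' \<in> subs p A" "B' \<in> subs q B" for A' B'
  proof -
    have f: "finite A'" "finite B'" using that assms finite_subset by auto
    have "Rpoly A' \<noteq> 0" "Rpoly B' \<noteq> 0" using Rpoly_monic[OF f(1)] Rpoly_monic[OF f(2)] by auto
    then have d: "degree (Rpoly A' * Rpoly B') = p + q"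
      using Rpoly_monic[OF f(1)] Rpoly_monic[OF f(2)] that
      by (simp add: degree_mult_eq)
    have "lead_coeff (Rpoly A' * Rpoly B') = 1"
      unfolding lead_coeff_mult using Rpoly_monic[OF f(1)] Rpoly_monic[OF f(2)] by (metis mult_1)
    with d show ?thesis by simp
  qed
  show "degree (Syl p q A B) \<le> p + q" unfolding Syl_WW
    apply (rule degree_sum_le, simp add: assms)
    apply (rule degree_sum_le, simp add: assms)
    apply (rule order_trans[OF degree_smult_le]) using dg by simp
  show "coeff (Syl p q A B) (p + q) = sig p q A B" unfolding Syl_WW sig_def coeff_sum coeff_smult
    by (intro sum.cong refl) (simp add: coeff_sum dg)
qed

lemma WW_evalA:
  assumes fA: "finite A" and fB: "finite B" and a0: "a0 \<in> A"
    and A': "A' \<subseteq> A - {a0}" "card A' = p" and B': "B' \<subseteq> B"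
  shows "WW A B A' B' * (Rprod {a0} A' * Rprod {a0} B')
       = (-1) ^ p * Rprod {a0} B * WW (A - {a0}) B A' B'"
proof -
  define U where "U = A - {a0} - A'"
  define V where "V = B - B'"
  have fin: "finite A'" "finite B'" "finite U" "finite V"
    using A'(1) B' fA fB unfolding U_def V_def by (auto intro: finite_subset)
  have AA: "A - A' = {a0} \<union> U" using A' a0 unfolding U_def by auto
  have BB: "B = B' \<union> V" using B' unfolding V_def by auto
  have 1: "Rprod (A - A') V = Rprod {a0} V * Rprod U V"
    unfolding AA by (rule Rprod_union_left) (use fin A' in \<open>auto simp: U_def\<close>)
  have 2: "Rprod A' (A - A') = Rprod A' {a0} * Rprod A' U"
    unfolding AA by (rule Rprod_union_right) (use fin A' in \<open>auto simp: U_def\<close>)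
  have 3: "Rprod {a0} A' = (-1) ^ p * Rprod A' {a0}"
    using Rprod_swap[of A' "{a0}"] fin A' by simp
  have 4: "Rprod {a0} B = Rprod {a0} B' * Rprod {a0} V"
    unfolding BB by (rule Rprod_union_right) (use fin in \<open>auto simp: V_def\<close>)
  have nz: "Rprod A' {a0} \<noteq> 0" "Rprod A' U \<noteq> 0" "Rprod B' V \<noteq> 0"
    using fin A' by (auto intro!: Rprod_nz simp: U_def V_def simp del: Rprod_def)
  have e: "A - {a0} - A' = U" "B - B' = V" unfolding U_def V_def by auto
  show ?thesis unfolding WW_def e 1 2 3 4 using nz
    by (simp add: field_simps)
qed

lemma poly_Syl_A:
  assumes fA: "finite A" and fB: "finite B" and a0: "a0 \<in> A"
  shows "poly (Syl p q A B) a0 = (-1) ^ p * Rprod {a0} B * sig p q (A - {a0}) B"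
proof -
  have "poly (Syl p q A B) a0 = (\<Sum>A'\<in>subs p A. \<Sum>B'\<in>subs q B.
          WW A B A' B' * (Rprod {a0} A' * Rprod {a0} B'))"
    unfolding Syl_WW by (simp add: poly_sum poly_Rpoly)
  also have "\<dots> = (\<Sum>A'\<in>subs p (A - {a0}). \<Sum>B'\<in>subs q B.
          WW A B A' B' * (Rprod {a0} A' * Rprod {a0} B'))"
  proof (rule sum.mono_neutral_right)
    show "finite (subs p A)" using fA by simp
    show "subs p (A - {a0}) \<subseteq> subs p A" by auto
    show "\<forall>i\<in>subs p A - subs p (A - {a0}). (\<Sum>B'\<in>subs q B.
          WW A B i B' * (Rprod {a0} i * Rprod {a0} B')) = 0"
    proof
      fix A' assume "A' \<in> subs p A - subs p (A - {a0})"
      then have "a0 \<in> A'" "finite A'" using fA finite_subset by auto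
      then have "Rprod {a0} A' = 0" unfolding Rprod_single_left
        by (auto simp: prod_zero_iff)
      then show "(\<Sum>B'\<in>subs q B. WW A B A' B' * (Rprod {a0} A' * Rprod {a0} B')) = 0"
        by simp
    qed
  qed
  also have "\<dots> = (\<Sum>A'\<in>subs p (A - {a0}). \<Sum>B'\<in>subs q B.
          (-1) ^ p * Rprod {a0} B * WW (A - {a0}) B A' B')"
    by (intro sum.cong refl WW_evalA[OF fA fB a0]) auto
  also have "\<dots> = (-1) ^ p * Rprod {a0} B * sig p q (A - {a0}) B"
    unfolding sig_def by (simp add: sum_distrib_left)
  finally show ?thesis .
qed

lemma WW_evalB:
  assumes fA: "finite A" and fB: "finite B" and b0: "b0 \<in> B"
    and A': "A' \<subseteq> A" "card A' = p" and B': "B' \<subseteq> B - {b0}" "card B' = q"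
  shows "WW A B A' B' * (Rprod {b0} A' * Rprod {b0} B')
       = (-1) ^ (p + q) * Rprod A {b0} * WW A (B - {b0}) A' B'"
proof -
  define U where "U = A - A'"
  define V where "V = B - {b0} - B'"
  have fin: "finite A'" "finite B'" "finite U" "finite V"
    using A'(1) B'(1) fA fB unfolding U_def V_def by (auto intro: finite_subset)
  have BB: "B - B' = {b0} \<union> V" using B' b0 unfolding V_def by auto
  have AA: "A = A' \<union> U" using A' unfolding U_def by auto
  have 1: "Rprod U (B - B') = Rprod U {b0} * Rprod U V"
    unfolding BB by (rule Rprod_union_right) (use fin B' in \<open>auto simp: V_def\<close>)
  have 2: "Rprod B' (B - B') = Rprod B' {b0} * Rprod B' V"
    unfolding BB by (rule Rprod_union_right) (use fin B' in \<open>auto simp: V_def\<close>)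
  have 3: "Rprod {b0} A' = (-1) ^ p * Rprod A' {b0}"
    using Rprod_swap[of A' "{b0}"] fin A' by simp
  have 5: "Rprod {b0} B' = (-1) ^ q * Rprod B' {b0}"
    using Rprod_swap[of B' "{b0}"] fin B' by simp
  have 4: "Rprod A {b0} = Rprod A' {b0} * Rprod U {b0}"
  proof -
    have "A' \<inter> U = {}" unfolding U_def by auto
    then have "Rprod (A' \<union> U) {b0} = Rprod A' {b0} * Rprod U {b0}"
      using Rprod_union_left fin by blast
    then show ?thesis using AA by simp
  qed
  have nz: "Rprod B' {b0} \<noteq> 0" "Rprod A' U \<noteq> 0" "Rprod B' V \<noteq> 0"
    using fin B' by (auto intro!: Rprod_nz simp: U_def V_def simp del: Rprod_def)
  have e: "A - A' = U" "B - {b0} - B' = V" unfolding U_def V_def by auto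
  show ?thesis unfolding WW_def e 1 2 3 5 4 using nz
    by (simp add: field_simps power_add)
qed

lemma poly_Syl_B:
  assumes fA: "finite A" and fB: "finite B" and b0: "b0 \<in> B"
  shows "poly (Syl p q A B) b0 = (-1) ^ (p + q) * Rprod A {b0} * sig p q A (B - {b0})"
proof -
  have "poly (Syl p q A B) b0 = (\<Sum>A'\<in>subs p A. \<Sum>B'\<in>subs q B.
          WW A B A' B' * (Rprod {b0} A' * Rprod {b0} B'))"
    unfolding Syl_WW by (simp add: poly_sum poly_Rpoly)
  also have "\<dots> = (\<Sum>A'\<in>subs p A. \<Sum>B'\<in>subs q (B - {b0}).
          WW A B A' B' * (Rprod {b0} A' * Rprod {b0} B'))"
  proof (rule sum.cong[OF refl], rule sum.mono_neutral_right)
    show "finite (subs q B)" using fB by simp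
    show "subs q (B - {b0}) \<subseteq> subs q B" by auto
    fix A'
    show "\<forall>i\<in>subs q B - subs q (B - {b0}).
          WW A B A' i * (Rprod {b0} A' * Rprod {b0} i) = 0"
    proof
      fix B' assume "B' \<in> subs q B - subs q (B - {b0})"
      then have "b0 \<in> B'" "finite B'" using fB finite_subset by auto
      then have "Rprod {b0} B' = 0" unfolding Rprod_single_left
        by (auto simp: prod_zero_iff)
      then show "WW A B A' B' * (Rprod {b0} A' * Rprod {b0} B') = 0"
        by simp
    qed
  qed
  also have "\<dots> = (\<Sum>A'\<in>subs p A. \<Sum>B'\<in>subs q (B - {b0}).
          (-1) ^ (p + q) * Rprod A {b0} * WW A (B - {b0}) A' B')"
    by (intro sum.cong refl WW_evalB[OF fA fB b0]) auto
  also have "\<dots> = (-1) ^ (p + q) * Rprod A {b0} * sig p q A (B - {b0})"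
    unfolding sig_def by (simp add: sum_distrib_left)
  finally show ?thesis .
qed

lemma bij_compl:
  assumes "finite A" "p \<le> card A"
  shows "bij_betw (\<lambda>X. A - X) (subs p A) (subs (card A - p) A)"
proof (rule bij_betw_byWitness[where f' = "\<lambda>X. A - X"])
  show "\<forall>a\<in>subs p A. A - (A - a) = a" by auto
  show "\<forall>a'\<in>subs (card A - p) A. A - (A - a') = a'" by auto
  show "(\<lambda>X. A - X) ` subs p A \<subseteq> subs (card A - p) A"
    using assms by (auto simp: card_Diff_subset intro: finite_subset) (metis card_Diff_subset finite_subset)
  show "(\<lambda>X. A - X) ` subs (card A - p) A \<subseteq> subs p A"
  proof
    fix Y assume "Y \<in> (\<lambda>X. A - X) ` subs (card A - p) A"
    then obtain X where X: "X \<subseteq> A" "card X = card A - p" "Y = A - X" by auto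
    have "finite X" using X assms finite_subset by auto
    then have "card Y = card A - (card A - p)" using X by (simp add: card_Diff_subset)
    then show "Y \<in> subs p A" using X assms by auto
  qed
qed

lemma sig_compl:
  assumes fA: "finite A" and fB: "finite B" and p: "p \<le> card A" and q: "q \<le> card B"
  shows "sig (card A - p) (card B - q) A B
     = (-1) ^ (p * (card A - p) + q * (card B - q)) * sig p q A B"
proof -
  have "sig (card A - p) (card B - q) A B
     = (\<Sum>A'\<in>subs p A. \<Sum>B'\<in>subs (card B - q) B. WW A B (A - A') B')"
    unfolding sig_def by (rule sum.reindex_bij_betw[symmetric, OF bij_compl[OF fA p]])
  also have "\<dots> = (\<Sum>A'\<in>subs p A. \<Sum>B'\<in>subs q B. WW A B (A - A') (B - B'))"
    by (intro sum.cong refl sum.reindex_bij_betw[symmetric, OF bij_compl[OF fB q]])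
  also have "\<dots> = (\<Sum>A'\<in>subs p A. \<Sum>B'\<in>subs q B.
        (-1) ^ (p * (card A - p) + q * (card B - q)) * WW A B A' B')"
  proof (intro sum.cong refl)
    fix A' B' assume A': "A' \<in> subs p A" and B': "B' \<in> subs q B"
    have fin: "finite A'" "finite B'" "finite (A - A')" "finite (B - B')"
      using A' B' fA fB by (auto intro: finite_subset)
    have c: "card (A - A') = card A - p" "card (B - B') = card B - q"
      using A' B' fin by (auto simp: card_Diff_subset)
    have e: "A - (A - A') = A'" "B - (B - B') = B'" using A' B' by auto
    have s1: "Rprod (A - A') A' = (-1) ^ (p * (card A - p)) * Rprod A' (A - A')"
      using Rprod_swap[of A' "A - A'"] fin c A' by simp
    have s2: "Rprod (B - B') B' = (-1) ^ (q * (card B - q)) * Rprod B' (B - B')"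
      using Rprod_swap[of B' "B - B'"] fin c B' by simp
    have nz: "Rprod A' (A - A') \<noteq> 0" "Rprod B' (B - B') \<noteq> 0"
      by (auto intro!: Rprod_nz simp del: Rprod_def)
    have pm: "((-1::'a) ^ (p * (card A - p)))\<^sup>2 = 1" "((-1::'a) ^ (q * (card B - q)))\<^sup>2 = 1"
      by (simp_all add: power_mult_distrib[symmetric] power_mult[symmetric])
    show "WW A B (A - A') (B - B') = (-1) ^ (p * (card A - p) + q * (card B - q)) * WW A B A' B'"
      unfolding WW_def e s1 s2 using nz pm
      by (simp add: field_simps power_add power2_eq_square)
  qed
  also have "\<dots> = (-1) ^ (p * (card A - p) + q * (card B - q)) * sig p q A B"
    unfolding sig_def by (simp add: sum_distrib_left)
  finally show ?thesis .
qed

lemma poly_zero_roots: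
  fixes P :: "'a::idom poly"
  assumes "finite S" "degree P < card S" "\<forall>x\<in>S. poly P x = 0"
  shows "P = 0"
proof (rule ccontr)
  assume nz: "P \<noteq> 0"
  have "S \<subseteq> {x. poly P x = 0}" using assms by auto
  then have "card S \<le> card {x. poly P x = 0}"
    using poly_roots_finite[OF nz] by (rule card_mono[rotated])
  also have "\<dots> \<le> degree P" by (rule card_poly_roots_bound[OF nz])
  finally show False using assms by simp
qed

lemma sig_big: "finite A \<Longrightarrow> card A < p \<Longrightarrow> sig p q A B = 0"
proof -
  assume "finite A" "card A < p"
  then have "subs p A = {}" by (auto dest: card_mono[OF \<open>finite A\<close>])
  then show ?thesis unfolding sig_def by (simp only: sum.empty)
qed

lemma m1_eq: "even (a + b) \<Longrightarrow> (-1::'a::ring_1) ^ a = (-1) ^ b"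
  unfolding minus_one_power_iff by simp

lemma m1_neq: "odd (a + b) \<Longrightarrow> (-1::'a::ring_1) ^ a = - ((-1) ^ b)"
  unfolding minus_one_power_iff by simp

lemma sig_big2: "finite B \<Longrightarrow> card B < q \<Longrightarrow> sig p q A B = 0"
proof -
  assume "finite B" "card B < q"
  then have "subs q B = {}" by (auto dest: card_mono[OF \<open>finite B\<close>])
  then show ?thesis unfolding sig_def by (simp only: sum.empty sum.neutral_const)
qed

lemma par1: fixes m n p q :: nat shows "p < m \<Longrightarrow> q \<le> n \<Longrightarrow> m \<le> p+q \<Longrightarrow> n \<le> p+q \<Longrightarrow> p+q+1 \<le> m+n \<Longrightarrow>
  even (p + (p+q-(m-1))*(q+1) + (m+n-(p+q)-1)*(n-(m+n-(p+q)-1)) + ((p+q-m)*(n-q)+(p+q-n)))"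
proof -
  assume h: "p < m" "q \<le> n" "m \<le> p+q" "n \<le> p+q" "p+q+1 \<le> m+n"
  obtain i j r s k where e: "m = p + i" "n = q + j" "q = i + r" "p = j + s" "i + j = k + 1"
  proof -
    have "\<exists>i j r s k. m = p + i \<and> n = q + j \<and> q = i + r \<and> p = j + s \<and> i + j = k + 1"
      apply (rule exI[of _ "m-p"], rule exI[of _ "n-q"], rule exI[of _ "q-(m-p)"],
             rule exI[of _ "p-(n-q)"], rule exI[of _ "m-p+(n-q)-1"])
      using h by (intro conjI) auto
    then show ?thesis using that by blast
  qed
  have e2: "p+q-(m-1) = r + 1" "m+n-(p+q)-1 = k" "n-(m+n-(p+q)-1) = r + 1" "n - k = r + 1" "p+q-m = r" "n - q = j" "p+q-n = s"
    using e h by auto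
  show ?thesis unfolding e2 unfolding e(4) e(3) using e(5) by (simp add: even_add even_mult_iff) presburger
qed

lemma par2: fixes m n p q :: nat shows "q \<le> n \<Longrightarrow> p \<le> m \<Longrightarrow> m \<le> p+q \<Longrightarrow> n \<le> p+q \<Longrightarrow> p+q+1 \<le> m+n \<Longrightarrow>
  odd (((p+q-m)*(n-q)+(p+q-n)) + (m+n-(p+q)-1) + (p+q-m)*(m+n-(p+q)-1) + (p+q-m)*(q+1) + (p+q))"
proof -
  assume h: "q \<le> n" "p \<le> m" "m \<le> p+q" "n \<le> p+q" "p+q+1 \<le> m+n"
  obtain i j r s k where e: "m = p + i" "n = q + j" "q = i + r" "p = j + s" "i + j = k + 1"
  proof -
    have "\<exists>i j r s k. m = p + i \<and> n = q + j \<and> q = i + r \<and> p = j + s \<and> i + j = k + 1"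
      apply (rule exI[of _ "m-p"], rule exI[of _ "n-q"], rule exI[of _ "q-(m-p)"],
             rule exI[of _ "p-(n-q)"], rule exI[of _ "m-p+(n-q)-1"])
      using h by (intro conjI) auto
    then show ?thesis using that by blast
  qed
  have e2: "m+n-(p+q)-1 = k" "p+q-m = r" "n - q = j" "p+q-n = s"
    using e h by auto
  show ?thesis unfolding e2 unfolding e(4) e(3) using e(5) by (simp add: even_add even_mult_iff) presburger
qed

definition LeadP :: "'a::field set \<Rightarrow> 'a set \<Rightarrow> nat \<Rightarrow> nat \<Rightarrow> bool" where
  "LeadP A0 B0 p0 q0 \<longleftrightarrow> sig p0 q0 A0 B0 = (-1) ^ ((p0 + q0 - card A0) * (q0 + 1))
     * of_nat ((card A0 + card B0 - (p0 + q0)) choose (card A0 - p0))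
     * sig (card A0) (p0 + q0 - card A0) A0 B0"

lemma main_step:
  fixes A B :: "'a::field set" and m n p q :: nat
  assumes IH: "\<And>(A0::'a set) B0 p0 q0. finite A0 \<Longrightarrow> finite B0 \<Longrightarrow> A0 \<inter> B0 = {} \<Longrightarrow>
      card A0 + card B0 < card A + card B \<Longrightarrow> p0 \<le> card A0 \<Longrightarrow> q0 \<le> card B0 \<Longrightarrow>
      max (card A0) (card B0) \<le> p0 + q0 \<Longrightarrow> p0 + q0 \<le> card A0 + card B0 \<Longrightarrow>
      LeadP A0 B0 p0 q0"
  and fA: "finite A" and fB: "finite B" and disj: "A \<inter> B = {}"
  and cA: "card A = m" and cB: "card B = n"
  and pm: "p \<le> m" and qn: "q \<le> n" and lo: "max m n \<le> p + q" and hi: "p + q + 1 \<le> m + n"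
  shows "Syl p q A B =
     smult ((-1) ^ ((p + q - m) * (n - q) + (p + q - n))
            * of_nat ((m + n - (p + q) - 1) choose (n - q)))
           (Syl 0 (m + n - (p + q) - 1) A B)
   + smult ((-1) ^ ((p + q - m) * (q + 1))
            * of_nat ((m + n - (p + q) - 1 + 1) choose (m - p)))
           (Syl m (p + q - m) A B)"
proof -
  define d where "d = p + q"
  define k where "k = m + n - (p + q) - 1"
  define r where "r = p + q - m"
  define \<alpha> :: 'a where "\<alpha> = (-1) ^ ((p + q - m) * (n - q) + (p + q - n))
            * of_nat ((m + n - (p + q) - 1) choose (n - q))"
  define \<beta> :: 'a where "\<beta> = (-1) ^ ((p + q - m) * (q + 1))
            * of_nat ((m + n - (p + q) - 1 + 1) choose (m - p))"
  have ar: "m \<le> d" "n \<le> d" "d + 1 \<le> m + n" "k + 1 + d = m + n" "m + r = d" "k < d"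
    using lo hi unfolding d_def k_def r_def by auto
  define P where "P = Syl p q A B - (smult \<alpha> (Syl 0 k A B) + smult \<beta> (Syl m r A B))"
  have degP: "degree P \<le> d"
  proof -
    have "degree (Syl p q A B) \<le> d" using coeff_Syl_deg(1)[OF fA fB, of p q] d_def by simp
    moreover have "degree (Syl 0 k A B) \<le> d" using coeff_Syl_deg(1)[OF fA fB, of 0 k] ar by simp
    moreover have "degree (Syl m r A B) \<le> d" using coeff_Syl_deg(1)[OF fA fB, of m r] ar by simp
    ultimately show ?thesis unfolding P_def
      by (intro degree_diff_le degree_add_le order_trans[OF degree_smult_le]) auto
  qed
  have evA: "poly P a0 = 0" if a0: "a0 \<in> A" for a0
  proof -
    define A0 where "A0 = A - {a0}"
    define g where "g = Rprod {a0} B"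
    have fA0: "finite A0" and cA0: "card A0 = m - 1" and m1: "m \<ge> 1"
      using fA a0 cA unfolding A0_def by (auto simp: card_gt_0_iff Suc_le_eq)
    have Y0: "sig m r A0 B = 0" by (rule sig_big[OF fA0]) (use cA0 m1 in auto)
    have key: "(-1) ^ p * sig p q A0 B = \<alpha> * sig 0 k A0 B"
    proof (cases "p = m")
      case True
      have "sig p q A0 B = 0" by (rule sig_big[OF fA0]) (use cA0 m1 True in auto)
      moreover have "(m + n - (p + q) - 1) choose (n - q) = 0"
        using True ar(3) unfolding d_def by (intro binomial_eq_0) auto
      ultimately show ?thesis unfolding \<alpha>_def by (simp only: of_nat_0 mult_zero_left mult_zero_right)
    next
      case False
      then have pl: "p < m" using pm by auto
      have L: "LeadP A0 B p q"
        apply (rule IH[of A0 B p q]) using fA0 fB disj cA0 cA cB pm qn lo hi pl m1 by (auto simp: A0_def)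
      have h1: "sig p q A0 B = (-1) ^ ((p+q-(m-1)) * (q+1)) * of_nat (k choose (m-1-p))
                 * sig (m-1) (p+q-(m-1)) A0 B"
      proof -
        have eq: "m - 1 + n - (p + q) = k" using m1 unfolding k_def by arith
        show ?thesis using L eq unfolding LeadP_def cA0 cB by simp
      qed
      have kn: "k \<le> n" using ar unfolding d_def by auto
      have h2: "sig (m-1) (p+q-(m-1)) A0 B = (-1) ^ (k * (n - k)) * sig 0 k A0 B"
      proof -
        have "sig (card A0 - 0) (card B - k) A0 B = (-1) ^ (0 * (card A0 - 0) + k * (card B - k)) * sig 0 k A0 B"
          by (rule sig_compl[OF fA0 fB]) (use kn cB in auto)
        moreover have "card B - k = p+q-(m-1)" using ar cB m1 unfolding k_def d_def by auto
        ultimately show ?thesis using cA0 cB by simp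
      qed
      have bin: "k choose (m-1-p) = (m + n - (p + q) - 1) choose (n - q)"
      proof -
        have "m - 1 - p \<le> k" using ar pl qn unfolding k_def d_def by arith
        moreover have "n - q = k - (m - 1 - p)" using ar pl qn unfolding k_def d_def by arith
        ultimately show ?thesis unfolding k_def[symmetric] using binomial_symmetric[of "m - 1 - p" k] by simp
      qed
      have sg: "(-1::'a) ^ p * (-1) ^ ((p+q-(m-1)) * (q+1)) * (-1) ^ (k * (n - k))
             = (-1) ^ ((p + q - m) * (n - q) + (p + q - n))"
        unfolding power_add[symmetric] k_def
        by (rule m1_eq, rule par1) (use pl qn lo hi in auto)
      show ?thesis unfolding h1 h2 \<alpha>_def bin[symmetric] sg[symmetric] by (simp add: ac_simps)
    qed
    have "poly P a0 = (-1) ^ p * g * sig p q A0 B - (\<alpha> * (g * sig 0 k A0 B) + \<beta> * ((-1) ^ m * g * sig m r A0 B))"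
      unfolding P_def A0_def g_def using poly_Syl_A[OF fA fB a0] by simp
    also have "\<dots> = g * ((-1) ^ p * sig p q A0 B - \<alpha> * sig 0 k A0 B)" unfolding Y0
      by (simp add: algebra_simps)
    finally show ?thesis using key by simp
  qed
  have evB: "poly P b0 = 0" if b0: "b0 \<in> B" for b0
  proof -
    define B0 where "B0 = B - {b0}"
    define f where "f = Rprod A {b0}"
    have fB0: "finite B0" and cB0: "card B0 = n - 1" and n1: "n \<ge> 1"
      using fB b0 cB unfolding B0_def by (auto simp: card_gt_0_iff Suc_le_eq)
    have rn: "r \<le> n - 1" using ar unfolding r_def d_def k_def by auto
    have comp: "sig 0 k A B0 = (-1) ^ (r * k) * sig m r A B0"
    proof -
      have "sig (card A - card A) (card B0 - r) A B0 = (-1) ^ (card A * (card A - card A) + r * (card B0 - r)) * sig (card A) r A B0"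
        by (rule sig_compl[OF fA fB0]) (use rn cB0 in auto)
      moreover have "card B0 - r = k" using ar cB0 n1 unfolding k_def r_def d_def by auto
      ultimately show ?thesis using cA by simp
    qed
    have key: "(-1) ^ (p + q) * sig p q A B0
        = \<alpha> * ((-1) ^ k * sig 0 k A B0) + \<beta> * ((-1) ^ (m + r) * sig m r A B0)"
    proof -
      define S where "S = sig m r A B0"
      have mr: "m + r = p + q" using ar unfolding d_def by simp
      have sgn: "(-1::'a) ^ ((p + q - m) * (n - q) + (p + q - n)) * (-1) ^ k * (-1) ^ (r * k)
             = - ((-1) ^ ((p + q - m) * (q + 1)) * (-1) ^ (p + q))"
      proof -
        have "(-1::'a) ^ ((p + q - m) * (n - q) + (p + q - n) + k + (p + q - m) * k)
             = - ((-1) ^ ((p + q - m) * (q + 1) + (p + q)))"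
        proof (rule m1_neq)
          have "odd (((p+q-m)*(n-q)+(p+q-n)) + (m+n-(p+q)-1) + (p+q-m)*(m+n-(p+q)-1) + (p+q-m)*(q+1) + (p+q))"
            by (rule par2) (use qn pm lo hi in auto)
          then show "odd ((p + q - m) * (n - q) + (p + q - n) + k + (p + q - m) * k + ((p + q - m) * (q + 1) + (p + q)))"
            unfolding k_def by (simp only: add.assoc not_False_eq_True)
        qed
        then show ?thesis unfolding power_add r_def by (simp add: ac_simps)
      qed
      show ?thesis
      proof (cases "q = n")
        case True
        have z: "sig p q A B0 = 0" by (rule sig_big2[OF fB0]) (use cB0 n1 True in auto)
        have b1: "(m + n - (p + q) - 1 + 1) choose (m - p) = 1"
          using True ar unfolding d_def by auto
        have b2: "(m + n - (p + q) - 1) choose (n - q) = 1" using True by simp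
        have "\<alpha> * ((-1) ^ k * sig 0 k A B0) + \<beta> * ((-1) ^ (m + r) * sig m r A B0)
             = ((-1) ^ ((p + q - m) * (n - q) + (p + q - n)) * (-1) ^ k * (-1) ^ (r * k)
                + (-1) ^ ((p + q - m) * (q + 1)) * (-1) ^ (p + q)) * S"
          unfolding \<alpha>_def \<beta>_def comp b1 b2 mr S_def by (simp add: algebra_simps)
        also have "\<dots> = 0" unfolding sgn by simp
        finally show ?thesis using z by simp
      next
        case False
        then have ql: "q < n" using qn by auto
        have L: "LeadP A B0 p q"
          apply (rule IH[of A B0 p q]) using fA fB0 disj cB0 cA cB pm qn lo hi ql n1
          by (auto simp: B0_def)
        have h1: "sig p q A B0 = (-1) ^ ((p + q - m) * (q + 1)) * of_nat (k choose (m - p)) * S"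
        proof -
          have eq: "m + (n - 1) - (p + q) = k" using n1 unfolding k_def by arith
          show ?thesis using L eq unfolding LeadP_def cA cB0 S_def r_def by simp
        qed
        show ?thesis
        proof (cases "p = m")
          case True
          have b0: "(m + n - (p + q) - 1) choose (n - q) = 0"
            using True ar unfolding d_def by (intro binomial_eq_0) auto
          have b1: "(m + n - (p + q) - 1 + 1) choose (m - p) = 1" using True by simp
          have b3: "k choose (m - p) = 1" using True by simp
          show ?thesis unfolding h1 \<alpha>_def \<beta>_def b0 b1 b3 mr S_def
            by (simp add: power_add[symmetric])
        next
          case False
          then have pl: "p < m" using pm by auto
          obtain j where j: "m - p = Suc j" using pl by (metis Suc_diff_Suc)
          have nq: "n - q = k - j" "j \<le> k" using ar pl qn j unfolding k_def d_def by arith+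
          have b1: "(m + n - (p + q) - 1 + 1) choose (m - p) = (k choose j) + (k choose Suc j)"
            unfolding k_def[symmetric] j by simp
          have b2: "(m + n - (p + q) - 1) choose (n - q) = k choose j"
            unfolding k_def[symmetric] nq(1) using binomial_symmetric[OF nq(2)] by simp
          have "\<alpha> * ((-1) ^ k * sig 0 k A B0) + \<beta> * ((-1) ^ (m + r) * sig m r A B0)
             = ((-1) ^ ((p + q - m) * (n - q) + (p + q - n)) * (-1) ^ k * (-1) ^ (r * k) * of_nat (k choose j)
                + (-1) ^ ((p + q - m) * (q + 1)) * (-1) ^ (p + q) * (of_nat (k choose j) + of_nat (k choose Suc j))) * S"
            unfolding \<alpha>_def \<beta>_def comp b1 b2 mr S_def by (simp add: algebra_simps)
          also have "\<dots> = (-1) ^ ((p + q - m) * (q + 1)) * (-1) ^ (p + q) * of_nat (k choose Suc j) * S"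
            unfolding sgn by (simp add: algebra_simps)
          also have "\<dots> = (-1) ^ (p + q) * sig p q A B0"
            unfolding h1 j by (simp add: ac_simps)
          finally show ?thesis by simp
        qed
      qed
    qed
    have "poly P b0 = f * ((-1) ^ (p + q) * sig p q A B0
        - (\<alpha> * ((-1) ^ k * sig 0 k A B0) + \<beta> * ((-1) ^ (m + r) * sig m r A B0)))"
      unfolding P_def B0_def f_def using poly_Syl_B[OF fA fB b0]
      by (simp add: algebra_simps)
    then show ?thesis using key by simp
  qed
  have "P = 0"
  proof (rule poly_zero_roots[of "A \<union> B"])
    show "finite (A \<union> B)" using fA fB by simp
    have "card (A \<union> B) = m + n" using card_Un_disjoint[OF fA fB disj] cA cB by simp
    then show "degree P < card (A \<union> B)" using degP ar by simp
    show "\<forall>x\<in>A \<union> B. poly P x = 0" using evA evB by auto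
  qed
  then show ?thesis unfolding P_def \<alpha>_def \<beta>_def k_def r_def by simp
qed

lemma lead_all:
  fixes A B :: "'a::field set"
  shows "finite A \<Longrightarrow> finite B \<Longrightarrow> A \<inter> B = {} \<Longrightarrow> p \<le> card A \<Longrightarrow> q \<le> card B \<Longrightarrow>
    max (card A) (card B) \<le> p + q \<Longrightarrow> p + q \<le> card A + card B \<Longrightarrow> LeadP A B p q"
proof (induction "card A + card B" arbitrary: A B p q rule: less_induct)
  case (less A B p q)
  show ?case
  proof (cases "p + q = card A + card B")
    case True
    then have pq: "p = card A" "q = card B" using less.prems by auto
    have "even (card B * (card B + 1))" by simp
    then show ?thesis unfolding LeadP_def pq by (simp add: minus_one_power_iff)
  next
    case False
    define m where "m = card A"
    define n where "n = card B"
    have hi: "p + q + 1 \<le> m + n" using False less.prems unfolding m_def n_def by auto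
    have E: "Syl p q A B =
     smult ((-1) ^ ((p + q - m) * (n - q) + (p + q - n))
            * of_nat ((m + n - (p + q) - 1) choose (n - q)))
           (Syl 0 (m + n - (p + q) - 1) A B)
   + smult ((-1) ^ ((p + q - m) * (q + 1))
            * of_nat ((m + n - (p + q) - 1 + 1) choose (m - p)))
           (Syl m (p + q - m) A B)"
      by (rule main_step[OF less.hyps]) (use less.prems hi in \<open>auto simp: m_def n_def\<close>)
    have "coeff (Syl p q A B) (p + q) = sig p q A B"
      using coeff_Syl_deg(2) less.prems by blast
    moreover have "coeff (Syl 0 (m + n - (p + q) - 1) A B) (p + q) = 0"
    proof (rule coeff_eq_0)
      have "degree (Syl 0 (m + n - (p + q) - 1) A B) \<le> 0 + (m + n - (p + q) - 1)"
        using coeff_Syl_deg(1) less.prems by blast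
      moreover have "m + n - (p + q) - 1 < p + q" using less.prems hi unfolding m_def n_def by auto
      ultimately show "degree (Syl 0 (m + n - (p + q) - 1) A B) < p + q" by simp
    qed
    moreover have "coeff (Syl m (p + q - m) A B) (p + q) = sig m (p + q - m) A B"
      using coeff_Syl_deg(2)[of A B m "p + q - m"] less.prems unfolding m_def by auto
    moreover have "m + n - (p + q) - 1 + 1 = m + n - (p + q)" using hi by auto
    ultimately have "sig p q A B = (-1) ^ ((p + q - m) * (q + 1))
            * of_nat ((m + n - (p + q)) choose (m - p)) * sig m (p + q - m) A B"
      using arg_cong[OF E, of "\<lambda>P. coeff P (p + q)"] by simp
    then show ?thesis unfolding LeadP_def m_def n_def .
  qed
qed

lemma main_disjoint:
  fixes A B :: "'a::field set" and m n p q :: nat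
  assumes "finite A" "finite B" "A \<inter> B = {}" "card A = m" "card B = n"
    and "p \<le> m" "q \<le> n"
    and "max m n \<le> p + q" "p + q + 1 \<le> m + n"
  shows "Syl p q A B =
     smult ((-1) ^ ((p + q - m) * (n - q) + (p + q - n))
            * of_nat ((m + n - (p + q) - 1) choose (n - q)))
           (Syl 0 (m + n - (p + q) - 1) A B)
   + smult ((-1) ^ ((p + q - m) * (q + 1))
            * of_nat ((m + n - (p + q) - 1 + 1) choose (m - p)))
           (Syl m (p + q - m) A B)"
  by (rule main_step[OF lead_all]) (use assms in auto)

section \<open>Ring homomorphisms\<close>

definition rh :: "('b::comm_ring_1 \<Rightarrow> 'c::comm_ring_1) \<Rightarrow> bool" where
  "rh \<phi> \<longleftrightarrow> (\<forall>x y. \<phi> (x + y) = \<phi> x + \<phi> y) \<and> (\<forall>x y. \<phi> (x * y) = \<phi> x * \<phi> y) \<and> \<phi> 1 = 1"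

context
  fixes \<phi> :: "'b::comm_ring_1 \<Rightarrow> 'c::comm_ring_1"
  assumes h: "rh \<phi>"
begin

lemma rh_add: "\<phi> (x + y) = \<phi> x + \<phi> y" using h unfolding rh_def by blast
lemma rh_mult: "\<phi> (x * y) = \<phi> x * \<phi> y" using h unfolding rh_def by blast
lemma rh_one: "\<phi> 1 = 1" using h unfolding rh_def by blast
lemma rh_zero: "\<phi> 0 = 0"
proof -
  have "\<phi> 0 = \<phi> 0 + \<phi> 0" using rh_add[of 0 0] by simp
  then show ?thesis by simp
qed
lemma rh_uminus: "\<phi> (- x) = - \<phi> x"
proof -
  have "\<phi> x + \<phi> (- x) = 0" using rh_add[of x "-x"] rh_zero by simp
  then show ?thesis by (simp add: eq_neg_iff_add_eq_0 add.commute)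
qed
lemma rh_diff: "\<phi> (x - y) = \<phi> x - \<phi> y"
  using rh_add[of x "-y"] rh_uminus[of y] by simp
lemma rh_sum: "\<phi> (sum f S) = (\<Sum>x\<in>S. \<phi> (f x))"
  by (induction S rule: infinite_finite_induct) (simp_all add: rh_zero rh_add)
lemma rh_prod: "\<phi> (prod f S) = (\<Prod>x\<in>S. \<phi> (f x))"
  by (induction S rule: infinite_finite_induct) (simp_all add: rh_one rh_mult)
lemma rh_power: "\<phi> (x ^ n) = \<phi> x ^ n"
  by (induction n) (simp_all add: rh_one rh_mult)
lemma rh_of_nat: "\<phi> (of_nat n) = of_nat n"
  by (induction n) (simp_all add: rh_one rh_add rh_zero)

lemma map_poly_rh_add: "map_poly \<phi> (P + Q) = map_poly \<phi> P + map_poly \<phi> Q"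
  by (intro poly_eqI) (simp add: coeff_map_poly rh_zero rh_add)
lemma map_poly_rh_smult: "map_poly \<phi> (smult c P) = smult (\<phi> c) (map_poly \<phi> P)"
  by (rule map_poly_smult) (simp_all add: rh_zero rh_mult)
lemma map_poly_rh_pCons: "map_poly \<phi> (pCons c P) = pCons (\<phi> c) (map_poly \<phi> P)"
  by (rule map_poly_pCons) (simp add: rh_zero)
lemma map_poly_rh_mult: "map_poly \<phi> (P * Q) = map_poly \<phi> P * map_poly \<phi> Q"
proof (induction P rule: pCons_induct)
  case 0 then show ?case by simp
next
  case (pCons a P)
  show ?case by (simp add: map_poly_rh_add map_poly_rh_smult map_poly_rh_pCons pCons.IH rh_zero
     del: pCons_0_0)
qed
lemma map_poly_rh_sum: "map_poly \<phi> (sum f S) = (\<Sum>x\<in>S. map_poly \<phi> (f x))"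
  by (induction S rule: infinite_finite_induct) (simp_all add: map_poly_rh_add)
lemma map_poly_rh_prod: "map_poly \<phi> (prod f S) = (\<Prod>x\<in>S. map_poly \<phi> (f x))"
  by (induction S rule: infinite_finite_induct) (simp_all add: map_poly_rh_mult rh_one)
lemma map_poly_rh_lin: "map_poly \<phi> [:- x, 1:] = [:- \<phi> x, 1:]"
  by (simp add: map_poly_rh_pCons rh_uminus rh_one rh_zero)

lemma map_poly_rh_inj: "inj \<phi> \<Longrightarrow> map_poly \<phi> P = map_poly \<phi> Q \<Longrightarrow> P = Q"
  by (auto simp: poly_eq_iff coeff_map_poly rh_zero dest: injD)

end

section \<open>Generalised Sylvester sums\<close>

definition SylG :: "('k::field \<Rightarrow> 'b::comm_ring_1) \<Rightarrow> ('k \<Rightarrow> 'b) \<Rightarrow> ('k \<Rightarrow> 'b)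
   \<Rightarrow> nat \<Rightarrow> nat \<Rightarrow> 'k set \<Rightarrow> 'k set \<Rightarrow> 'b poly" where
  "SylG c h u p q A B = (\<Sum>A'\<in>subs p A. \<Sum>B'\<in>subs q B.
     smult ((\<Prod>a\<in>A'. \<Prod>b\<in>B'. h a - u b) * (\<Prod>a\<in>A - A'. \<Prod>b\<in>B - B'. h a - u b)
            * c (1 / (Rprod A' (A - A') * Rprod B' (B - B'))))
       ((\<Prod>a\<in>A'. [:- h a, 1:]) * (\<Prod>b\<in>B'. [:- u b, 1:])))"

lemma SylG_id: "SylG id id id p q A B = Syl p q A B"
  unfolding SylG_def Syl_def Rprod_def Rpoly_def by simp

lemma SylG_map: "rh \<phi> \<Longrightarrow> map_poly \<phi> (SylG c h u p q A B) = SylG (\<phi> \<circ> c) (\<phi> \<circ> h) (\<phi> \<circ> u) p q A B"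
  unfolding SylG_def
  by (simp add: map_poly_rh_sum map_poly_rh_smult map_poly_rh_mult map_poly_rh_prod
      map_poly_rh_lin rh_mult rh_prod rh_diff)

lemma sum_subs_image:
  assumes "inj_on g X"
  shows "(\<Sum>S\<in>subs p (g ` X). F S) = (\<Sum>X'\<in>subs p X. F (g ` X'))"
proof -
  have inj: "inj_on ((`) g) (subs p X)"
    by (rule inj_on_subset[OF inj_on_image_Pow[OF assms]]) auto
  have eq: "subs p (g ` X) = (`) g ` subs p X"
  proof
    show "subs p (g ` X) \<subseteq> (`) g ` subs p X"
    proof
      fix S assume S: "S \<in> subs p (g ` X)"
      then obtain Y where Y: "Y \<subseteq> X" "S = g ` Y" by (auto simp: subset_image_iff)
      have "card Y = p" using S Y card_image[OF inj_on_subset[OF assms Y(1)]] by auto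
      then show "S \<in> (`) g ` subs p X" using Y by auto
    qed
    show "(`) g ` subs p X \<subseteq> subs p (g ` X)"
      using card_image[OF inj_on_subset[OF assms]] by auto
  qed
  show ?thesis unfolding eq by (simp add: sum.reindex[OF inj])
qed

lemma Rprod_image: "inj_on f X \<Longrightarrow> inj_on g Y \<Longrightarrow>
    Rprod (f ` X) (g ` Y) = (\<Prod>a\<in>X. \<Prod>b\<in>Y. f a - g b)"
  unfolding Rprod_def by (simp add: prod.reindex)

lemma Rpoly_image: "inj_on f X \<Longrightarrow> Rpoly (f ` X) = (\<Prod>a\<in>X. [:- f a, 1:])"
  unfolding Rpoly_def by (simp add: prod.reindex)

lemma rh_inverse_field:
  fixes c :: "'k::field \<Rightarrow> 'f::field"
  assumes "rh c" shows "c (1 / x) = 1 / c x"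
proof (cases "x = 0")
  case True then show ?thesis using rh_zero[OF assms] by simp
next
  case False
  have "c x * c (1 / x) = 1" using rh_mult[OF assms, of x "1/x"] rh_one[OF assms] False by simp
  moreover then have "c x \<noteq> 0" by auto
  ultimately show ?thesis by (simp add: eq_divide_eq mult.commute)
qed

lemma SylG_Syl:
  fixes c :: "'k::field \<Rightarrow> 'f::field" and T :: 'f
  assumes c: "rh c" and ic: "inj c" and iu: "inj_on (\<lambda>b. c b + T) B"
  shows "SylG c c (\<lambda>b. c b + T) p q A B = Syl p q (c ` A) ((\<lambda>b. c b + T) ` B)"
proof -
  define u where "u = (\<lambda>b. c b + T)"
  have icX: "inj_on c X" for X using ic by (rule inj_on_subset) auto
  have iuX: "inj_on u X" if "X \<subseteq> B" for X using iu that unfolding u_def by (rule inj_on_subset)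
  have "Syl p q (c ` A) (u ` B) = (\<Sum>A'\<in>subs p A. \<Sum>B'\<in>subs q B.
     smult (Rprod (c ` A') (u ` B') * Rprod (c ` A - c ` A') (u ` B - u ` B') /
               (Rprod (c ` A') (c ` A - c ` A') * Rprod (u ` B') (u ` B - u ` B')))
              (Rpoly (c ` A') * Rpoly (u ` B')))"
    unfolding Syl_def sum_subs_image[OF icX] sum_subs_image[OF iuX[OF order_refl]] ..
  also have "\<dots> = SylG c c u p q A B" unfolding SylG_def
  proof (intro sum.cong refl)
    fix A' B' assume A': "A' \<in> subs p A" and B': "B' \<in> subs q B"
    have d1: "c ` A - c ` A' = c ` (A - A')" using icX[of A] by (simp add: image_set_diff[OF ic])
    have d2: "u ` B - u ` B' = u ` (B - B')" using B' by (auto simp: inj_on_image_set_diff[OF iuX[OF order_refl]])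
    have r1: "Rprod (c ` A') (u ` B') = (\<Prod>a\<in>A'. \<Prod>b\<in>B'. c a - u b)"
      by (rule Rprod_image[OF icX iuX]) (use B' in auto)
    have r2: "Rprod (c ` (A - A')) (u ` (B - B')) = (\<Prod>a\<in>A - A'. \<Prod>b\<in>B - B'. c a - u b)"
      by (rule Rprod_image[OF icX iuX]) auto
    have r3: "Rprod (c ` A') (c ` (A - A')) = c (Rprod A' (A - A'))"
    proof -
      have "Rprod (c ` A') (c ` (A - A')) = (\<Prod>a\<in>A'. \<Prod>b\<in>A - A'. c a - c b)"
        by (rule Rprod_image[OF icX icX])
      also have "\<dots> = c (Rprod A' (A - A'))" by (simp add: Rprod_def rh_prod[OF c] rh_diff[OF c])
      finally show ?thesis .
    qed
    have r4: "Rprod (u ` B') (u ` (B - B')) = c (Rprod B' (B - B'))"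
    proof -
      have "Rprod (u ` B') (u ` (B - B')) = (\<Prod>a\<in>B'. \<Prod>b\<in>B - B'. u a - u b)"
        by (rule Rprod_image[OF iuX iuX]) (use B' in auto)
      also have "\<dots> = c (Rprod B' (B - B'))" by (simp add: Rprod_def rh_prod[OF c] rh_diff[OF c] u_def)
      finally show ?thesis .
    qed
    have r5: "Rpoly (c ` A') * Rpoly (u ` B') = (\<Prod>a\<in>A'. [:- c a, 1:]) * (\<Prod>b\<in>B'. [:- u b, 1:])"
      using B' by (simp add: Rpoly_image[OF icX] Rpoly_image[OF iuX])
    show "smult (Rprod (c ` A') (u ` B') * Rprod (c ` A - c ` A') (u ` B - u ` B') /
               (Rprod (c ` A') (c ` A - c ` A') * Rprod (u ` B') (u ` B - u ` B')))
              (Rpoly (c ` A') * Rpoly (u ` B')) =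
          smult ((\<Prod>a\<in>A'. \<Prod>b\<in>B'. c a - u b) * (\<Prod>a\<in>A - A'. \<Prod>b\<in>B - B'. c a - u b)
            * c (1 / (Rprod A' (A - A') * Rprod B' (B - B'))))
       ((\<Prod>a\<in>A'. [:- c a, 1:]) * (\<Prod>b\<in>B'. [:- u b, 1:]))"
      unfolding d1 d2 r1 r2 r3 r4 r5 rh_inverse_field[OF c] rh_mult[OF c] by simp
  qed
  finally show ?thesis unfolding u_def ..
qed

lemma rh_comp: "rh f \<Longrightarrow> rh g \<Longrightarrow> rh (g \<circ> f)"
  unfolding rh_def by simp

lemma rh_coef: "rh \<phi> \<Longrightarrow> \<phi> ((-1) ^ a * of_nat b) = (-1) ^ a * of_nat b"
  by (simp add: rh_mult rh_power rh_uminus rh_one rh_of_nat)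

lemma rh_map_comb: "rh \<phi> \<Longrightarrow> map_poly \<phi> (smult ((-1) ^ a * of_nat b) P + smult ((-1) ^ a' * of_nat b') Q)
   = smult ((-1) ^ a * of_nat b) (map_poly \<phi> P) + smult ((-1) ^ a' * of_nat b') (map_poly \<phi> Q)"
  by (simp add: map_poly_rh_add map_poly_rh_smult rh_coef)

lemma rh_Fract: "rh (\<lambda>P::'a::idom. Fract P 1)"
  unfolding rh_def by (simp add: One_fract_def)

lemma inj_Fract: "inj (\<lambda>P::'a::idom. Fract P 1)"
  by (rule injI) (simp add: eq_fract)

lemma rh_const: "rh (\<lambda>k::'a::comm_ring_1. [:k:])"
  unfolding rh_def by (simp add: one_pCons)

lemma rh_ev0: "rh (\<lambda>P::'a::comm_ring_1 poly. poly P 0)"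
  unfolding rh_def by simp

theorem proposition3p8:
  fixes A B :: "'a::field set" and m n p q :: nat
  assumes "finite A" "finite B" "card A = m" "card B = n"
    and "p \<le> m" "q \<le> n"
    and "max m n \<le> p + q" "p + q + 1 \<le> m + n"
  shows "Syl p q A B =
     smult ((-1) ^ ((p + q - m) * (n - q) + (p + q - n))
            * of_nat ((m + n - (p + q) - 1) choose (n - q)))
           (Syl 0 (m + n - (p + q) - 1) A B)
   + smult ((-1) ^ ((p + q - m) * (q + 1))
            * of_nat ((m + n - (p + q) - 1 + 1) choose (m - p)))
           (Syl m (p + q - m) A B)"
proof -
  define \<iota> where "\<iota> = (\<lambda>P::'a poly. Fract P 1)"
  define c0 where "c0 = (\<lambda>k::'a. [:k:])"
  define u0 where "u0 = (\<lambda>k::'a. [:k, 1:])"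
  define c where "c = \<iota> \<circ> c0"
  define T where "T = \<iota> [:0, 1:]"
  define u where "u = (\<lambda>b. c b + T)"
  define ev where "ev = (\<lambda>P::'a poly. poly P 0)"
  define a1 where "a1 = (p + q - m) * (n - q) + (p + q - n)"
  define b1 where "b1 = (m + n - (p + q) - 1) choose (n - q)"
  define a2 where "a2 = (p + q - m) * (q + 1)"
  define b2 where "b2 = (m + n - (p + q) - 1 + 1) choose (m - p)"
  define k where "k = m + n - (p + q) - 1"
  define r where "r = p + q - m"
  have rhi: "rh \<iota>" unfolding \<iota>_def by (rule rh_Fract)
  have inji: "inj \<iota>" unfolding \<iota>_def by (rule inj_Fract)
  have rhc: "rh c" unfolding c_def c0_def by (rule rh_comp[OF rh_const rhi])
  have rhe: "rh ev" unfolding ev_def by (rule rh_ev0)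
  have uu: "u = \<iota> \<circ> u0"
  proof
    fix b :: 'a
    have "[:b:] + [:0, 1:] = [:b, 1:]" by simp
    then show "u b = (\<iota> \<circ> u0) b" unfolding u_def c_def T_def c0_def u0_def
      using rh_add[OF rhi, of "[:b:]" "[:0,1:]"] by simp
  qed
  have injc: "inj c"
  proof (rule injI)
    fix x y assume "c x = c y"
    then have "[:x:] = [:y:]" using inji unfolding c_def c0_def by (auto dest: injD)
    then show "x = y" by simp
  qed
  have inju: "inj u"
  proof (rule injI)
    fix x y assume "u x = u y"
    then have "[:x, 1:] = [:y, 1:]" using inji unfolding uu u0_def by (auto dest: injD)
    then show "x = y" by simp
  qed
  have disj: "c ` A \<inter> u ` B = {}"
  proof (rule ccontr)
    assume "c ` A \<inter> u ` B \<noteq> {}"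
    then obtain a b where "c a = u b" by auto
    then have "[:a:] = [:b, 1:]" using inji unfolding uu c_def c0_def u0_def by (auto dest: injD)
    then have "coeff [:a:] 1 = coeff [:b, 1:] 1" by (rule arg_cong)
    then show False by simp
  qed
  have cA: "card (c ` A) = m" using card_image[of c A] injc assms by (simp add: inj_on_subset)
  have cB: "card (u ` B) = n" using card_image[of u B] inju assms by (simp add: inj_on_subset)
  have EF: "Syl p q (c ` A) (u ` B) =
     smult ((-1) ^ a1 * of_nat b1) (Syl 0 k (c ` A) (u ` B))
   + smult ((-1) ^ a2 * of_nat b2) (Syl m r (c ` A) (u ` B))"
    unfolding a1_def b1_def a2_def b2_def k_def r_def
    by (rule main_disjoint) (use assms disj cA cB in auto)
  have G: "Syl x y (c ` A) (u ` B) = map_poly \<iota> (SylG c0 c0 u0 x y A B)" for x y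
  proof -
    have "Syl x y (c ` A) (u ` B) = SylG c c u x y A B"
      unfolding u_def by (rule SylG_Syl[symmetric, OF rhc injc]) (use inju in \<open>auto simp: u_def intro: inj_on_subset\<close>)
    also have "\<dots> = map_poly \<iota> (SylG c0 c0 u0 x y A B)"
      unfolding SylG_map[OF rhi] c_def uu ..
    finally show ?thesis .
  qed
  have E0: "SylG c0 c0 u0 p q A B = smult ((-1) ^ a1 * of_nat b1) (SylG c0 c0 u0 0 k A B)
     + smult ((-1) ^ a2 * of_nat b2) (SylG c0 c0 u0 m r A B)"
    by (rule map_poly_rh_inj[OF rhi inji]) (use EF in \<open>simp add: G rh_map_comb[OF rhi]\<close>)
  have H: "map_poly ev (SylG c0 c0 u0 x y A B) = Syl x y A B" for x y
  proof -
    have "ev \<circ> c0 = id" "ev \<circ> u0 = id" unfolding ev_def c0_def u0_def by auto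
    then show ?thesis unfolding SylG_map[OF rhe] by (simp add: SylG_id)
  qed
  have "Syl p q A B = smult ((-1) ^ a1 * of_nat b1) (Syl 0 k A B)
     + smult ((-1) ^ a2 * of_nat b2) (Syl m r A B)"
    using arg_cong[OF E0, of "map_poly ev"] by (simp add: H rh_map_comb[OF rhe])
  then show ?thesis unfolding a1_def b1_def a2_def b2_def k_def r_def .
qed

end
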